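(* Let $g\ge1$, $n=g+1$, $k\in\{1,\dots,g\}$, $I_k=\{1,\dots,k\}$, $\kappa_1,\dots,\kappa_n\in\mathbb C$ pairwise distinct, $\beta_1,\dots,\beta_g,\lambda_1,\dots,\lambda_g\in\mathbb C^*$, $\beta_0=\lambda_0=1$. Let $A$ be the $k\times n$ matrix with $A_{ij}=\delta_{ij}$ for $j\le k$ and $A_{ij}=\frac{\beta_{i-1}}{\beta_{j-1}(\kappa_j-\kappa_i)^2}\prod_{l\in I_k,l\ne i}\frac{\kappa_i-\kappa_l}{\kappa_j-\kappa_l}$ for $i\le k<j$, and let $\tilde A=V\cdot\mathrm{diag}(1,\lambda_1,\dots,\lambda_g)$ with $V_{ij}=\kappa_j^{i-1}$. Then $A$ and $\tilde A$ have the same row space (represent the same point of $\mathrm{Gr}(k,n)$) if and only if for all $j\in[g]$ $$\beta_j=\lambda_j^{-1}\,\exp\Big[\tfrac k2R_{jj}-\sum_{l=1}^{k-1}R_{jl}\Big].$$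
   Context: $R$ is the $g\times g$ symmetric matrix with $R_{ii}=-2\log(\kappa_{i+1}-\kappa_1)^2$ and $R_{ij}=\log\frac{(\kappa_{i+1}-\kappa_{j+1})^2}{(\kappa_{i+1}-\kappa_1)^2(\kappa_{j+1}-\kappa_1)^2}$ for $i\ne j$ (the limit period matrix of the degenerating hyperelliptic curves $y^2=\prod_i(x-\kappa_i-\varepsilon)(x-\kappa_i+\varepsilon)$); the right-hand side is independent of the branch of $\log$, e.g. $\exp[\tfrac12R_{jj}]=(\kappa_{j+1}-\kappa_1)^{-2}$. *)

theory Defs
  imports "HOL-Analysis.Analysis"
begin

text \<open>Matrices are functions on 1-based indices; a k x n matrix M is M i j for
  i in {1..k}, j in {1..n}.\<close>

definition row_space :: "nat \<Rightarrow> nat \<Rightarrow> (nat \<Rightarrow> nat \<Rightarrow> complex) \<Rightarrow> (nat \<Rightarrow> complex) set" where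
  "row_space k n M =
     {(\<lambda>j. if j \<in> {1..n} then (\<Sum>i=1..k. c i * M i j) else 0) | c. True}"

definition matA :: "nat \<Rightarrow> (nat \<Rightarrow> complex) \<Rightarrow> (nat \<Rightarrow> complex) \<Rightarrow> nat \<Rightarrow> nat \<Rightarrow> complex" where
  "matA k \<kappa> \<beta> i j =
     (if j \<le> k then (if i = j then 1 else 0)
      else \<beta> (i - 1) / (\<beta> (j - 1) * (\<kappa> j - \<kappa> i)^2) *
           (\<Prod>l\<in>{1..k} - {i}. (\<kappa> i - \<kappa> l) / (\<kappa> j - \<kappa> l)))"

text \<open>The matrix A~ = V * diag(1, lambda_1, ..., lambda_g), V i j = kappa_j^(i-1)
  (with lambda_0 = 1 assumed separately).\<close>
definition matAt :: "(nat \<Rightarrow> complex) \<Rightarrow> (nat \<Rightarrow> complex) \<Rightarrow> nat \<Rightarrow> nat \<Rightarrow> complex" where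
  "matAt \<kappa> lam i j = \<kappa> j ^ (i - 1) * lam (j - 1)"

definition Rmat :: "(nat \<Rightarrow> complex) \<Rightarrow> nat \<Rightarrow> nat \<Rightarrow> complex" where
  "Rmat \<kappa> i j =
     (if i = j then - 2 * ln ((\<kappa> (i+1) - \<kappa> 1)^2)
      else ln ((\<kappa> (i+1) - \<kappa> (j+1))^2 / ((\<kappa> (i+1) - \<kappa> 1)^2 * (\<kappa> (j+1) - \<kappa> 1)^2)))"

end

theory Submission
  imports Defs "HOL-Computational_Algebra.Polynomial"
begin

definition LB :: "nat \<Rightarrow> (nat \<Rightarrow> complex) \<Rightarrow> nat \<Rightarrow> complex \<Rightarrow> complex" where
  "LB k \<kappa> i x = (\<Prod>l\<in>{1..k}-{i}. (x - \<kappa> l) / (\<kappa> i - \<kappa> l))"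

definition LP :: "nat \<Rightarrow> (nat \<Rightarrow> complex) \<Rightarrow> nat \<Rightarrow> complex poly" where
  "LP k \<kappa> i = smult (1 / (\<Prod>l\<in>{1..k}-{i}. (\<kappa> i - \<kappa> l))) (\<Prod>l\<in>{1..k}-{i}. [:- \<kappa> l, 1:])"

lemma poly_LP: "poly (LP k \<kappa> i) x = LB k \<kappa> i x"
  unfolding LP_def LB_def by (simp add: poly_prod prod_dividef)

lemma degree_LP: assumes "i \<in> {1..k}" shows "degree (LP k \<kappa> i) \<le> k - 1"
proof -
  have "degree (LP k \<kappa> i) \<le> degree (\<Prod>l\<in>{1..k}-{i}. [:- \<kappa> l, 1:])"
    unfolding LP_def by (rule degree_smult_le)
  also have "\<dots> \<le> sum (degree \<circ> (\<lambda>l. [:- \<kappa> l, 1:])) ({1..k}-{i})"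
    by (rule degree_prod_sum_le) simp
  also have "\<dots> = card ({1..k}-{i})" by simp
  also have "\<dots> \<le> k - 1"
    using assms by (simp add: card_Diff_singleton)
  finally show ?thesis .
qed

lemma LB_node:
  assumes "inj_on \<kappa> {1..k}" "i \<in> {1..k}" "j \<in> {1..k}"
  shows "LB k \<kappa> i (\<kappa> j) = (if i = j then 1 else 0)"
proof (cases "i = j")
  case True
  have "\<And>l. l \<in> {1..k}-{i} \<Longrightarrow> \<kappa> i - \<kappa> l \<noteq> 0"
    using assms inj_onD by fastforce
  then show ?thesis using True unfolding LB_def by (simp add: prod_dividef)
next
  case False
  then show ?thesis unfolding LB_def using assms
    by (intro trans[OF prod_zero]) auto
qed

lemma poly_as_sum:
  fixes q :: "complex poly"
  assumes "degree q < k"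
  shows "poly q x = (\<Sum>m=1..k. coeff q (m-1) * x^(m-1))"
proof -
  have "poly q x = (\<Sum>i\<le>degree q. coeff q i * x ^ i)" by (rule poly_altdef)
  also have "\<dots> = (\<Sum>i<k. coeff q i * x ^ i)"
    using assms by (intro sum.mono_neutral_left) (auto simp: coeff_eq_0)
  also have "\<dots> = (\<Sum>m=1..k. coeff q (m-1) * x^(m-1))"
  proof -
    have "(\<Sum>m=1..k. coeff q (m-1) * x^(m-1)) = (\<Sum>m=Suc 0..Suc (k-1). coeff q (m-1) * x^(m-1))"
      using assms by simp
    also have "\<dots> = (\<Sum>i=0..k-1. coeff q i * x ^ i)"
      by (subst sum.shift_bounds_cl_Suc_ivl) simp
    also have "\<dots> = (\<Sum>i<k. coeff q i * x ^ i)"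
      using assms by (intro sum.cong) auto
    finally show ?thesis by simp
  qed
  finally show ?thesis .
qed

lemma lagrange:
  assumes "inj_on \<kappa> {1..k}" "k \<ge> 1"
  shows "(\<Sum>m=1..k. c m * x^(m-1)) =
         (\<Sum>i=1..k. (\<Sum>m=1..k. c m * \<kappa> i^(m-1)) * LB k \<kappa> i x)"
proof -
  define p where "p = (\<Sum>m=1..k. monom (c m) (m-1))"
  define q where "q = (\<Sum>i=1..k. smult (poly p (\<kappa> i)) (LP k \<kappa> i))"
  have pp: "poly p y = (\<Sum>m=1..k. c m * y^(m-1))" for y
    unfolding p_def by (simp add: poly_sum poly_monom)
  have pq: "poly q y = (\<Sum>i=1..k. poly p (\<kappa> i) * LB k \<kappa> i y)" for y
    unfolding q_def by (simp add: poly_sum poly_LP)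
  have dp: "degree p < k"
  proof -
    have "degree p \<le> k - 1" unfolding p_def
      by (rule degree_sum_le) (auto intro: order_trans[OF degree_monom_le])
    then show ?thesis using assms by simp
  qed
  have dq: "degree q < k"
  proof -
    have "degree q \<le> k - 1" unfolding q_def
      by (rule degree_sum_le) (use degree_LP in \<open>auto intro: order_trans[OF degree_smult_le]\<close>)
    then show ?thesis using assms by simp
  qed
  have card: "card (\<kappa> ` {1..k}) = k" using assms card_image by fastforce
  have "p = q"
  proof (rule poly_eqI_degree[of "\<kappa> ` {1..k}"])
    fix y assume "y \<in> \<kappa> ` {1..k}"
    then obtain j where j: "j \<in> {1..k}" "y = \<kappa> j" by auto
    have "poly q y = (\<Sum>i=1..k. poly p (\<kappa> i) * (if i = j then 1 else 0))"
      unfolding pq j(2) using LB_node[OF assms(1) _ j(1)] by (intro sum.cong) auto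
    also have "\<dots> = (\<Sum>i=1..k. if i = j then poly p (\<kappa> i) else 0)"
      by (intro sum.cong) auto
    also have "\<dots> = poly p y" using j by simp
    finally show "poly p y = poly q y" by simp
  qed (use card dp dq in auto)
  then have "poly p x = poly q x" by simp
  then show ?thesis by (simp only: pp pq)
qed

lemma lagrange_repr:
  assumes "k \<ge> 1"
  shows "\<exists>c. \<forall>x. (\<Sum>i=1..k. d i * LB k \<kappa> i x) = (\<Sum>m=1..k. c m * x^(m-1))"
proof -
  define q where "q = (\<Sum>i=1..k. smult (d i) (LP k \<kappa> i))"
  have pq: "poly q y = (\<Sum>i=1..k. d i * LB k \<kappa> i y)" for y
    unfolding q_def by (simp add: poly_sum poly_LP)
  have dq: "degree q < k"
  proof -
    have "degree q \<le> k - 1" unfolding q_def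
      by (rule degree_sum_le) (use degree_LP in \<open>auto intro: order_trans[OF degree_smult_le]\<close>)
    then show ?thesis using assms by simp
  qed
  show ?thesis
    by (rule exI[of _ "\<lambda>m. coeff q (m-1)"]) (metis pq poly_as_sum[OF dq])
qed


lemma matA_low: "j \<le> k \<Longrightarrow> matA k \<kappa> \<beta> i j = (if i = j then 1 else 0)"
  by (simp add: matA_def)

lemma sum_delta_mult: "finite A \<Longrightarrow> (\<Sum>i\<in>A. (if i = j then 1 else 0) * f i) = (if j \<in> A then f j else (0::complex))"
proof -
  assume "finite A"
  have "(\<Sum>i\<in>A. (if i = j then 1 else 0) * f i) = (\<Sum>i\<in>A. if i = j then f i else 0)"
    by (intro sum.cong) auto
  then show ?thesis using \<open>finite A\<close> by simp
qed

lemma sum_delta_mult': "finite A \<Longrightarrow> (\<Sum>i\<in>A. f i * (if i = j then 1 else 0)) = (if j \<in> A then f j else (0::complex))"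
  using sum_delta_mult[of A j f] by (simp add: mult.commute)

lemma rowspace_iff:
  assumes k1: "1 \<le> k" and kn: "k \<le> n" and inj: "inj_on \<kappa> {1..k}"
    and lamnz: "\<forall>j\<in>{1..n}. lam (j-1) \<noteq> 0"
  shows "row_space k n (matA k \<kappa> \<beta>) = row_space k n (matAt \<kappa> lam) \<longleftrightarrow>
    (\<forall>i\<in>{1..k}. \<forall>j\<in>{k<..n}. matA k \<kappa> \<beta> i j = lam (j-1) / lam (i-1) * LB k \<kappa> i (\<kappa> j))"
    (is "?L \<longleftrightarrow> ?C")
proof
  assume eq: ?L
  show ?C
  proof (intro ballI)
    fix i j assume i: "i \<in> {1..k}" and j: "j \<in> {k<..n}"
    define v where "v = (\<lambda>j. if j \<in> {1..n} then (\<Sum>i'=1..k. (if i' = i then 1 else 0) * matA k \<kappa> \<beta> i' j) else 0)"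
    have "v \<in> row_space k n (matA k \<kappa> \<beta>)" unfolding v_def row_space_def
      by (intro CollectI exI[of _ "\<lambda>i'. if i' = i then 1 else 0"]) simp
    then have "v \<in> row_space k n (matAt \<kappa> lam)" using eq by simp
    then obtain c where vc: "v = (\<lambda>j. if j \<in> {1..n} then (\<Sum>m=1..k. c m * matAt \<kappa> lam m j) else 0)"
      unfolding row_space_def by blast
    define P where "P = (\<lambda>x. \<Sum>m=1..k. c m * x^(m-1))"
    have hv: "matA k \<kappa> \<beta> i j' = lam (j'-1) * P (\<kappa> j')" if "j' \<in> {1..n}" for j'
    proof -
      have "v j' = matA k \<kappa> \<beta> i j'" unfolding v_def using that i by (simp add: sum_delta_mult)
      moreover have "v j' = lam (j'-1) * P (\<kappa> j')" unfolding vc P_def matAt_def using that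
        by (simp add: sum_distrib_left mult_ac)
      ultimately show ?thesis by simp
    qed
    have Pnode: "P (\<kappa> i') = (if i = i' then 1 else 0) / lam (i'-1)" if "i' \<in> {1..k}" for i'
    proof -
      have "lam (i'-1) \<noteq> 0" using lamnz that kn by auto
      moreover have "matA k \<kappa> \<beta> i i' = lam (i'-1) * P (\<kappa> i')" using hv that kn by auto
      ultimately show ?thesis using that by (simp add: matA_low field_simps)
    qed
    have "P (\<kappa> j) = (\<Sum>i'=1..k. P (\<kappa> i') * LB k \<kappa> i' (\<kappa> j))"
      unfolding P_def by (rule lagrange[OF inj k1])
    also have "\<dots> = (\<Sum>i'=1..k. (if i' = i then 1 else 0) * (LB k \<kappa> i' (\<kappa> j) / lam (i'-1)))"
      by (intro sum.cong) (auto simp: Pnode)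
    also have "\<dots> = LB k \<kappa> i (\<kappa> j) / lam (i-1)"
      using i by (simp only: sum_delta_mult[OF finite_atLeastAtMost]) simp
    finally show "matA k \<kappa> \<beta> i j = lam (j-1) / lam (i-1) * LB k \<kappa> i (\<kappa> j)"
      using hv[of j] j k1 by auto
  qed
next
  assume C: ?C
  have lnz: "lam (j-1) \<noteq> 0" if "j \<in> {1..n}" for j using lamnz that by auto
  have rowA: "(\<Sum>i=1..k. c i * matA k \<kappa> \<beta> i j) = lam (j-1) * (\<Sum>i=1..k. (c i / lam (i-1)) * LB k \<kappa> i (\<kappa> j))"
    if "j \<in> {1..n}" for c j
  proof (cases "j \<le> k")
    case True
    have "(\<Sum>i=1..k. c i * matA k \<kappa> \<beta> i j) = c j"
      using True that by (simp add: matA_low sum_delta_mult' if_distrib[of "\<lambda>t. c _ * t"] cong: if_cong)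
    moreover have "(\<Sum>i=1..k. (c i / lam (i-1)) * LB k \<kappa> i (\<kappa> j)) = c j / lam (j-1)"
    proof -
      have "(\<Sum>i=1..k. (c i / lam (i-1)) * LB k \<kappa> i (\<kappa> j)) = (\<Sum>i=1..k. (c i / lam (i-1)) * (if i = j then 1 else 0))"
        by (intro sum.cong) (use True that LB_node[OF inj] in auto)
      also have "\<dots> = c j / lam (j-1)" using True that
        by (simp only: sum_delta_mult'[OF finite_atLeastAtMost]) simp
      finally show ?thesis .
    qed
    ultimately show ?thesis using lnz[OF that] by simp
  next
    case False
    then have "j \<in> {k<..n}" using that by auto
    then have "(\<Sum>i=1..k. c i * matA k \<kappa> \<beta> i j) = (\<Sum>i=1..k. c i * (lam (j-1) / lam (i-1) * LB k \<kappa> i (\<kappa> j)))"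
      using C by (intro sum.cong) auto
    then show ?thesis by (simp add: sum_distrib_left mult_ac)
  qed
  show ?L
  proof
    show "row_space k n (matA k \<kappa> \<beta>) \<subseteq> row_space k n (matAt \<kappa> lam)"
    proof
      fix v assume "v \<in> row_space k n (matA k \<kappa> \<beta>)"
      then obtain c where vc: "v = (\<lambda>j. if j \<in> {1..n} then (\<Sum>i=1..k. c i * matA k \<kappa> \<beta> i j) else 0)"
        unfolding row_space_def by blast
      obtain c' where c': "\<And>x. (\<Sum>i=1..k. (c i / lam (i-1)) * LB k \<kappa> i x) = (\<Sum>m=1..k. c' m * x^(m-1))"
        using lagrange_repr[OF k1, of "\<lambda>i. c i / lam (i-1)" \<kappa>] by blast
      have "v = (\<lambda>j. if j \<in> {1..n} then (\<Sum>m=1..k. c' m * matAt \<kappa> lam m j) else 0)"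
        unfolding vc
      proof (rule ext)
        fix j
        show "(if j \<in> {1..n} then (\<Sum>i=1..k. c i * matA k \<kappa> \<beta> i j) else 0) =
              (if j \<in> {1..n} then (\<Sum>m=1..k. c' m * matAt \<kappa> lam m j) else 0)"
        proof (cases "j \<in> {1..n}")
          case True
          have "(\<Sum>i=1..k. c i * matA k \<kappa> \<beta> i j) = lam (j-1) * (\<Sum>i=1..k. (c i / lam (i-1)) * LB k \<kappa> i (\<kappa> j))"
            by (rule rowA[OF True])
          also have "\<dots> = lam (j-1) * (\<Sum>m=1..k. c' m * \<kappa> j^(m-1))" by (simp only: c')
          also have "\<dots> = (\<Sum>m=1..k. c' m * matAt \<kappa> lam m j)"
            unfolding matAt_def by (simp add: sum_distrib_left mult_ac)
          finally show ?thesis using True by simp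
        next
          case False then show ?thesis by (simp only: if_not_P[OF False] if_False)
        qed
      qed
      then show "v \<in> row_space k n (matAt \<kappa> lam)" unfolding row_space_def by blast
    qed
  next
    show "row_space k n (matAt \<kappa> lam) \<subseteq> row_space k n (matA k \<kappa> \<beta>)"
    proof
      fix v assume "v \<in> row_space k n (matAt \<kappa> lam)"
      then obtain c where vc: "v = (\<lambda>j. if j \<in> {1..n} then (\<Sum>m=1..k. c m * matAt \<kappa> lam m j) else 0)"
        unfolding row_space_def by blast
      define P where "P = (\<lambda>x. \<Sum>m=1..k. c m * x^(m-1))"
      define c' where "c' = (\<lambda>i. lam (i-1) * P (\<kappa> i))"
      have "v = (\<lambda>j. if j \<in> {1..n} then (\<Sum>i=1..k. c' i * matA k \<kappa> \<beta> i j) else 0)"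
      proof (rule ext)
        fix j
        show "v j = (if j \<in> {1..n} then (\<Sum>i=1..k. c' i * matA k \<kappa> \<beta> i j) else 0)"
        proof (cases "j \<in> {1..n}")
          case True
          have "(\<Sum>i=1..k. c' i * matA k \<kappa> \<beta> i j) = lam (j-1) * (\<Sum>i=1..k. P (\<kappa> i) * LB k \<kappa> i (\<kappa> j))"
            unfolding rowA[OF True] c'_def
            by (intro arg_cong[where f="\<lambda>t. lam (j-1) * t"] sum.cong) (use lnz kn in auto)
          also have "\<dots> = lam (j-1) * P (\<kappa> j)"
            unfolding P_def lagrange[OF inj k1, symmetric] ..
          also have "\<dots> = v j" unfolding vc P_def matAt_def using True
            by (simp add: sum_distrib_left mult_ac)
          finally show ?thesis using True by simp
        next
          case False then show ?thesis unfolding vc by (simp only: if_not_P[OF False] if_False)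
        qed
      qed
      then show "v \<in> row_space k n (matA k \<kappa> \<beta>)" unfolding row_space_def by blast
    qed
  qed
qed


lemma prod_minus_if: "finite A \<Longrightarrow> prod f (A - {t}) = prod (\<lambda>l. if l = t then 1 else f l) (A::nat set)"
  by (simp add: prod.If_cases Diff_eq)

definition GG :: "nat \<Rightarrow> (nat \<Rightarrow> complex) \<Rightarrow> nat \<Rightarrow> complex" where
  "GG k \<kappa> t = (\<Prod>l\<in>{1..k}-{t}. (\<kappa> t - \<kappa> l)^2)"

lemma C_iff:
  assumes inj: "inj_on \<kappa> {1..n}" and i: "i \<in> {1..k}" and j: "j \<in> {k<..n}"
    and nz: "\<beta> (i-1) \<noteq> 0" "\<beta> (j-1) \<noteq> 0" "lam (i-1) \<noteq> 0" "lam (j-1) \<noteq> 0"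
  shows "matA k \<kappa> \<beta> i j = lam (j-1) / lam (i-1) * LB k \<kappa> i (\<kappa> j) \<longleftrightarrow>
         \<beta> (i-1) * lam (i-1) * GG k \<kappa> i = \<beta> (j-1) * lam (j-1) * GG k \<kappa> j"
proof -
  define a where "a = (\<Prod>l\<in>{1..k}-{i}. (\<kappa> i - \<kappa> l))"
  define b where "b = (\<Prod>l\<in>{1..k}-{i}. (\<kappa> j - \<kappa> l))"
  define d where "d = \<kappa> j - \<kappa> i"
  have kn: "k \<le> n" using j by auto
  have ne: "\<kappa> x \<noteq> \<kappa> y" if "x \<in> {1..n}" "y \<in> {1..n}" "x \<noteq> y" for x y
    using inj that inj_onD by fastforce
  have anz: "a \<noteq> 0" unfolding a_def using ne i kn by (auto simp: prod_zero_iff)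
  have bnz: "b \<noteq> 0" unfolding b_def using ne i j kn by (auto simp: prod_zero_iff)
  have dnz: "d \<noteq> 0" unfolding d_def using ne i j kn by auto
  have jk: "\<not> j \<le> k" using j by auto
  have mA: "matA k \<kappa> \<beta> i j = \<beta> (i-1) / (\<beta> (j-1) * d^2) * (a / b)"
    unfolding matA_def a_def b_def d_def using jk by (simp add: prod_dividef)
  have lb: "LB k \<kappa> i (\<kappa> j) = b / a"
    unfolding LB_def a_def b_def by (simp add: prod_dividef)
  have gi: "GG k \<kappa> i = a^2" unfolding GG_def a_def by (simp add: prod_power_distrib)
  have gj: "GG k \<kappa> j = d^2 * b^2"
  proof -
    have "{1..k} - {j} = {1..k}" using jk by auto
    then have "GG k \<kappa> j = (\<Prod>l\<in>{1..k}. (\<kappa> j - \<kappa> l)^2)" unfolding GG_def by simp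
    also have "\<dots> = (\<kappa> j - \<kappa> i)^2 * (\<Prod>l\<in>{1..k}-{i}. (\<kappa> j - \<kappa> l)^2)"
      using i by (intro prod.remove) auto
    finally show ?thesis unfolding d_def b_def by (simp add: prod_power_distrib)
  qed
  show ?thesis unfolding mA lb gi gj using anz bnz dnz nz
    by (auto simp: field_simps power2_eq_square)
qed

lemma E_lemma:
  assumes inj: "inj_on \<kappa> {1..g+1}" and k: "k \<in> {1..g}" and m: "m \<in> {1..g}"
  shows "exp (of_nat k / 2 * Rmat \<kappa> m m - (\<Sum>l=1..k-1. Rmat \<kappa> m l)) * GG k \<kappa> (m+1) = GG k \<kappa> 1"
proof -
  have ne: "\<kappa> x \<noteq> \<kappa> y" if "x \<in> {1..g+1}" "y \<in> {1..g+1}" "x \<noteq> y" for x y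
    using inj that inj_onD by fastforce
  define w where "w = \<kappa> (m+1) - \<kappa> 1"
  define wl where "wl = (\<lambda>l. \<kappa> (l+1) - \<kappa> 1)"
  define Z where "Z = (\<lambda>l. if l = m then 1 else (\<kappa> (m+1) - \<kappa> (l+1))^2)"
  define S where "S = {1..k-1}"
  have wnz: "w \<noteq> 0" unfolding w_def using ne m by auto
  have wlnz: "wl l \<noteq> 0" if "l \<in> S" for l unfolding wl_def using ne that k S_def by auto
  have Znz: "Z l \<noteq> 0" if "l \<in> S" for l unfolding Z_def using ne that k m S_def by auto
  have cardS: "card S = k - 1" unfolding S_def by simp
  have h1: "exp (of_nat k / 2 * Rmat \<kappa> m m) = inverse ((w^2)^k)"
  proof -
    have "of_nat k / 2 * Rmat \<kappa> m m = - (of_nat k * ln (w^2))"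
      unfolding Rmat_def w_def by simp
    then show ?thesis using wnz by (simp add: exp_minus exp_of_nat_mult)
  qed
  have h2: "exp (Rmat \<kappa> m l) = Z l / (w^2 * (wl l)^2)" if l: "l \<in> S" for l
  proof (cases "l = m")
    case True
    have "Rmat \<kappa> m l = - (of_nat 2 * ln (w^2))" unfolding Rmat_def w_def using True by simp
    then have "exp (Rmat \<kappa> m l) = inverse ((w^2)^2)" using wnz
      by (simp only: exp_minus exp_of_nat_mult exp_Ln) simp
    then show ?thesis using True wnz unfolding Z_def wl_def w_def
      by (simp add: field_simps power2_eq_square)
  next
    case False
    have q: "(\<kappa> (m+1) - \<kappa> (l+1))^2 / ((\<kappa> (m+1) - \<kappa> 1)^2 * (\<kappa> (l+1) - \<kappa> 1)^2) \<noteq> 0"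
      using ne m l k False unfolding S_def by auto
    have "exp (Rmat \<kappa> m l) = (\<kappa> (m+1) - \<kappa> (l+1))^2 / ((\<kappa> (m+1) - \<kappa> 1)^2 * (\<kappa> (l+1) - \<kappa> 1)^2)"
      unfolding Rmat_def using False exp_Ln[OF q] by simp
    then show ?thesis using False unfolding Z_def wl_def w_def by simp
  qed
  have eS: "exp (\<Sum>l\<in>S. Rmat \<kappa> m l) = (\<Prod>l\<in>S. Z l) / ((w^2)^(k-1) * (\<Prod>l\<in>S. (wl l)^2))"
  proof -
    have "exp (\<Sum>l\<in>S. Rmat \<kappa> m l) = (\<Prod>l\<in>S. Z l / (w^2 * (wl l)^2))"
      unfolding S_def by (simp add: exp_sum h2[unfolded S_def])
    also have "\<dots> = (\<Prod>l\<in>S. Z l) / ((w^2)^(k-1) * (\<Prod>l\<in>S. (wl l)^2))"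
      by (simp add: prod_dividef prod.distrib cardS)
    finally show ?thesis .
  qed
  have G1: "GG k \<kappa> 1 = (\<Prod>l\<in>S. (wl l)^2)"
  proof -
    have "GG k \<kappa> 1 = (\<Prod>l\<in>{Suc 1..Suc (k-1)}. (\<kappa> 1 - \<kappa> l)^2)"
    proof -
      have "{1..k} - {1} = {Suc 1..Suc (k-1)}" using k by auto
      then show ?thesis unfolding GG_def by simp
    qed
    also have "\<dots> = (\<Prod>l\<in>S. (wl l)^2)" unfolding S_def wl_def
      by (subst prod.shift_bounds_cl_Suc_ivl) (simp add: power2_commute)
    finally show ?thesis .
  qed
  have Gm: "GG k \<kappa> (m+1) = w^2 * (\<Prod>l\<in>S. Z l)"
  proof -
    define h where "h = (\<lambda>l. if l = m+1 then 1 else (\<kappa> (m+1) - \<kappa> l)^2)"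
    have "GG k \<kappa> (m+1) = prod h {1..k}" unfolding GG_def h_def by (rule prod_minus_if) simp
    also have "\<dots> = h 1 * prod h {Suc 1..Suc (k-1)}"
      using k by (subst prod.atLeast_Suc_atMost) auto
    also have "\<dots> = w^2 * (\<Prod>l\<in>S. Z l)"
    proof -
      have "h 1 = w^2" unfolding h_def w_def using m by simp
      moreover have "prod h {Suc 1..Suc (k-1)} = (\<Prod>l\<in>S. Z l)"
        unfolding S_def prod.shift_bounds_cl_Suc_ivl
        by (intro prod.cong) (auto simp: h_def Z_def)
      ultimately show ?thesis by simp
    qed
    finally show ?thesis .
  qed
  have Pnz: "(\<Prod>l\<in>S. Z l) \<noteq> 0" using Znz by (simp add: S_def prod_zero_iff)
  have Wnz: "(\<Prod>l\<in>S. (wl l)^2) \<noteq> 0" using wlnz by (simp add: S_def prod_zero_iff)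
  have kk: "(w^2)^k = (w^2)^(k-1) * w^2" using k by (cases k) auto
  have "exp (of_nat k / 2 * Rmat \<kappa> m m - (\<Sum>l=1..k-1. Rmat \<kappa> m l)) =
        inverse ((w^2)^k) / ((\<Prod>l\<in>S. Z l) / ((w^2)^(k-1) * (\<Prod>l\<in>S. (wl l)^2)))"
    unfolding exp_diff h1 eS[unfolded S_def] S_def ..
  then show ?thesis unfolding G1 Gm kk using Pnz Wnz wnz
    by (simp add: field_simps)
qed


theorem proposition5p7:
  fixes g k :: nat and \<kappa> \<beta> lam :: "nat \<Rightarrow> complex"
  assumes "g \<ge> 1"
    and "k \<in> {1..g}"
    and "inj_on \<kappa> {1..g+1}"
    and "\<forall>j\<in>{1..g}. \<beta> j \<noteq> 0"
    and "\<forall>j\<in>{1..g}. lam j \<noteq> 0"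
    and "\<beta> 0 = 1" and "lam 0 = 1"
  shows "row_space k (g+1) (matA k \<kappa> \<beta>) = row_space k (g+1) (matAt \<kappa> lam) \<longleftrightarrow>
    (\<forall>j\<in>{1..g}. \<beta> j = inverse (lam j) *
        exp (of_nat k / 2 * Rmat \<kappa> j j - (\<Sum>l=1..k-1. Rmat \<kappa> j l)))"
proof -
  note g1 = assms(1) and k = assms(2) and inj = assms(3) and bnz = assms(4) and lnz = assms(5)
    and b0 = assms(6) and l0 = assms(7)
  define n where "n = g + 1"
  have k1: "1 \<le> k" and kn: "k \<le> n" using k n_def by auto
  have lamnz: "lam (j-1) \<noteq> 0" if "j \<in> {1..n}" for j
  proof (cases "j = 1")
    case False then have "j - 1 \<in> {1..g}" using that n_def by auto
    then show ?thesis using lnz by blast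
  qed (simp add: l0)
  have betnz: "\<beta> (j-1) \<noteq> 0" if "j \<in> {1..n}" for j
  proof (cases "j = 1")
    case False then have "j - 1 \<in> {1..g}" using that n_def by auto
    then show ?thesis using bnz by blast
  qed (simp add: b0)
  have injk: "inj_on \<kappa> {1..k}" using k by (intro inj_on_subset[OF inj]) auto
  have injn: "inj_on \<kappa> {1..n}" using inj n_def by simp
  have ne: "\<kappa> x \<noteq> \<kappa> y" if "x \<in> {1..n}" "y \<in> {1..n}" "x \<noteq> y" for x y
    using injn that inj_onD by fastforce
  have GGnz: "GG k \<kappa> t \<noteq> 0" if "t \<in> {1..n}" for t
  proof -
    have "\<kappa> t - \<kappa> l \<noteq> 0" if "l \<in> {1..k}-{t}" for l
      using ne[of t l] that \<open>t \<in> {1..n}\<close> kn by auto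
    then show ?thesis unfolding GG_def by (subst prod_zero_iff) auto
  qed
  define H where "H = (\<lambda>t. \<beta> (t-1) * lam (t-1) * GG k \<kappa> t)"
  have H1: "H 1 = GG k \<kappa> 1" unfolding H_def using b0 l0 by simp
  have lamnzb: "\<forall>j\<in>{1..n}. lam (j-1) \<noteq> 0" using lamnz by blast
  have step1: "row_space k (g+1) (matA k \<kappa> \<beta>) = row_space k (g+1) (matAt \<kappa> lam) \<longleftrightarrow>
    (\<forall>i\<in>{1..k}. \<forall>j\<in>{k<..n}. H i = H j)"
    unfolding n_def[symmetric] rowspace_iff[OF k1 kn injk lamnzb]
  proof (intro ball_cong refl)
    fix i j assume i: "i \<in> {1..k}" and j: "j \<in> {k<..n}"
    have i': "i \<in> {1..n}" and j': "j \<in> {1..n}" using i j kn by auto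
    show "matA k \<kappa> \<beta> i j = lam (j-1) / lam (i-1) * LB k \<kappa> i (\<kappa> j) \<longleftrightarrow> H i = H j"
      unfolding H_def
      by (rule C_iff[OF injn i j betnz[OF i'] betnz[OF j'] lamnz[OF i'] lamnz[OF j']])
  qed
  have step2: "(\<forall>j\<in>{1..g}. \<beta> j = inverse (lam j) *
        exp (of_nat k / 2 * Rmat \<kappa> j j - (\<Sum>l=1..k-1. Rmat \<kappa> j l))) \<longleftrightarrow>
     (\<forall>m\<in>{1..g}. H (m+1) = H 1)"
  proof (intro ball_cong refl)
    fix m assume m: "m \<in> {1..g}"
    define E where "E = exp (of_nat k / 2 * Rmat \<kappa> m m - (\<Sum>l=1..k-1. Rmat \<kappa> m l))"
    have EG: "E * GG k \<kappa> (m+1) = GG k \<kappa> 1" unfolding E_def by (rule E_lemma[OF inj k m])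
    have Gnz: "GG k \<kappa> (m+1) \<noteq> 0" using GGnz m n_def by auto
    have lm: "lam m \<noteq> 0" using lnz m by auto
    have "\<beta> m = inverse (lam m) * E \<longleftrightarrow> \<beta> m * lam m * GG k \<kappa> (m+1) = E * GG k \<kappa> (m+1)"
      using Gnz lm by (auto simp: field_simps)
    then show "\<beta> m = inverse (lam m) * E \<longleftrightarrow> H (m+1) = H 1"
      unfolding H1 EG[symmetric] H_def using b0 l0 by simp
  qed
  have step3: "(\<forall>i\<in>{1..k}. \<forall>j\<in>{k<..n}. H i = H j) \<longleftrightarrow> (\<forall>m\<in>{1..g}. H (m+1) = H 1)"
  proof
    assume A: "\<forall>i\<in>{1..k}. \<forall>j\<in>{k<..n}. H i = H j"
    show "\<forall>m\<in>{1..g}. H (m+1) = H 1"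
    proof
      fix m assume m: "m \<in> {1..g}"
      show "H (m+1) = H 1"
      proof (cases "m + 1 \<le> k")
        case True
        have kk: "k + 1 \<in> {k<..n}" using k n_def by auto
        have "m + 1 \<in> {1..k}" "1 \<in> {1..k}" using True k1 by auto
        then have "H (m+1) = H (k+1)" "H 1 = H (k+1)" using A kk by blast+
        then show ?thesis by simp
      next
        case False
        then have "m + 1 \<in> {k<..n}" using m n_def by auto
        moreover have "1 \<in> {1..k}" using k1 by auto
        ultimately show ?thesis using A by metis
      qed
    qed
  next
    assume B: "\<forall>m\<in>{1..g}. H (m+1) = H 1"
    have B': "H t = H 1" if "t \<in> {1..n}" for t
    proof (cases "t = 1")
      case False
      then have "t - 1 \<in> {1..g}" "t - 1 + 1 = t" using that n_def by auto
      then show ?thesis using B by metis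
    qed simp
    show "\<forall>i\<in>{1..k}. \<forall>j\<in>{k<..n}. H i = H j"
    proof (intro ballI)
      fix i j assume "i \<in> {1..k}" "j \<in> {k<..n}"
      then have "i \<in> {1..n}" "j \<in> {1..n}" using kn by auto
      then show "H i = H j" using B' by metis
    qed
  qed
  show ?thesis using step1 step2 step3 by simp
qed

end
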